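(* Let $r\ge1$ and let $\mathcal{P}$ be any partition of $[r]^2=\{1,\dots,r\}\times\{1,\dots,r\}$. Then the set of subgroups $\{G\subseteq\mathfrak{S}_r: [r]^2/G\text{ refines }\mathcal{P}\}$ forms a lattice under subgroup inclusion.
   Context: $\mathfrak{S}_r$ acts on $[r]^2$ diagonally, $\sigma(i,j)=(\sigma(i),\sigma(j))$, and $[r]^2/G$ denotes the partition of $[r]^2$ into $G$-orbits. A partition $Q$ refines $\mathcal{P}$ if every block of $Q$ is contained in some block of $\mathcal{P}$. *)

theory Defs
  imports "HOL-Algebra.Sym_Groups" "HOL-Algebra.Lattice" "HOL-Library.Disjoint_Sets"
begin

definition pair_orbits :: "(nat \<Rightarrow> nat) set \<Rightarrow> nat \<Rightarrow> (nat \<times> nat) set set" where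
  "pair_orbits G r =
     (\<lambda>(i, j). {(\<sigma> i, \<sigma> j) | \<sigma>. \<sigma> \<in> G}) ` ({1..r} \<times> {1..r})"

definition refines :: "'a set set \<Rightarrow> 'a set set \<Rightarrow> bool" where
  "refines Q P \<longleftrightarrow> (\<forall>q\<in>Q. \<exists>p\<in>P. q \<subseteq> p)"

definition refining_subgroups :: "nat \<Rightarrow> (nat \<times> nat) set set \<Rightarrow> (nat \<Rightarrow> nat) set gorder" where
  "refining_subgroups r P =
     \<lparr> carrier = {G. subgroup G (sym_group r) \<and> refines (pair_orbits G r) P},
       eq = (=), le = (\<subseteq>) \<rparr>"

end

theory Submission
  imports Defs
begin

lemma part_cover:
  assumes "partition_on A P" "x \<in> A" shows "\<exists>p\<in>P. x \<in> p"
  using partition_onD1[OF assms(1)] assms(2) by blast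

lemma part_uniq:
  assumes "partition_on A P" "p \<in> P" "q \<in> P" "x \<in> p" "x \<in> q" shows "p = q"
  using partition_onD2[OF assms(1)] assms(2-5) by (auto simp: disjoint_def)

lemma refining_po: "partial_order (refining_subgroups r P)"
  by (unfold_locales) (auto simp: refining_subgroups_def)

theorem lemma2p8:
  fixes r :: nat and P :: "(nat \<times> nat) set set"
  assumes "r \<ge> 1"
    and "partition_on ({1..r} \<times> {1..r}) P"
  shows "lattice (refining_subgroups r P)"
proof -
  note part = assms(2)
  interpret po: partial_order "refining_subgroups r P" by (rule refining_po)
  interpret S: group "sym_group r" by (rule sym_group_is_group)
  define H where "H = {\<sigma>. \<sigma> permutes {1..r} \<and>
     (\<forall>i\<in>{1..r}. \<forall>j\<in>{1..r}. \<forall>p\<in>P. (i,j) \<in> p \<longrightarrow> (\<sigma> i, \<sigma> j) \<in> p)}"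
  have Hsub: "subgroup H (sym_group r)"
  proof
    show "H \<subseteq> carrier (sym_group r)" by (auto simp: H_def sym_group_carrier)
    show "\<one>\<^bsub>sym_group r\<^esub> \<in> H" by (auto simp: H_def sym_group_one permutes_id)
    fix x y assume x: "x \<in> H" and y: "y \<in> H"
    then show "x \<otimes>\<^bsub>sym_group r\<^esub> y \<in> H"
      apply (simp add: H_def sym_group_mult permutes_compose)
      by (metis SigmaI permutes_in_image)
  next
    fix x assume x: "x \<in> H"
    then have xc: "x \<in> carrier (sym_group r)" and xp: "x permutes {1..r}"
      by (auto simp: H_def sym_group_carrier)
    have "inv' x \<in> H"
      unfolding H_def
    proof (intro CollectI conjI ballI impI)
      show "inv' x permutes {1..r}" using xp by (rule permutes_inv)
      fix i j p assume i: "i \<in> {1..r}" and j: "j \<in> {1..r}" and p: "p \<in> P" and ij: "(i,j) \<in> p"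
      have ii: "inv' x i \<in> {1..r}" "inv' x j \<in> {1..r}"
        using i j permutes_in_image[OF permutes_inv[OF xp]] by blast+
      then obtain q where q: "q \<in> P" "(inv' x i, inv' x j) \<in> q"
        using part_cover[OF part] by blast
      then have "(x (inv' x i), x (inv' x j)) \<in> q" using x ii by (auto simp: H_def)
      then have "(i, j) \<in> q" using permutes_inverses(1)[OF xp] by simp
      then have "q = p" using part_uniq[OF part q(1) p _ ij] by blast
      then show "(inv' x i, inv' x j) \<in> p" using q by simp
    qed
    then show "inv\<^bsub>sym_group r\<^esub> x \<in> H" using xc by simp
  qed
  have Href: "refines (pair_orbits H r) P"
    unfolding refines_def pair_orbits_def
  proof
    fix o' assume "o' \<in> (\<lambda>(i, j). {(\<sigma> i, \<sigma> j) |\<sigma>. \<sigma> \<in> H}) ` ({1..r} \<times> {1..r})"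
    then obtain i j where ij: "i \<in> {1..r}" "j \<in> {1..r}" and o: "o' = {(\<sigma> i, \<sigma> j) |\<sigma>. \<sigma> \<in> H}"
      by auto
    obtain p where p: "p \<in> P" "(i,j) \<in> p" using part_cover[OF part] ij by blast
    have "o' \<subseteq> p" using o p ij by (auto simp: H_def)
    then show "\<exists>p\<in>P. o' \<subseteq> p" using p by blast
  qed
  have Hcar: "H \<in> carrier (refining_subgroups r P)"
    using Hsub Href by (simp add: refining_subgroups_def)
  have Hbig: "G \<subseteq> H" if G: "G \<in> carrier (refining_subgroups r P)" for G
  proof
    fix \<sigma> assume s: "\<sigma> \<in> G"
    have Gs: "subgroup G (sym_group r)" and Gr: "refines (pair_orbits G r) P"
      using G by (auto simp: refining_subgroups_def)
    have sp: "\<sigma> permutes {1..r}"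
      using subgroup.subset[OF Gs] s by (auto simp: sym_group_carrier)
    have idG: "id \<in> G" using subgroup.one_closed[OF Gs] by (simp add: sym_group_one)
    have "\<forall>i\<in>{1..r}. \<forall>j\<in>{1..r}. \<forall>p\<in>P. (i,j) \<in> p \<longrightarrow> (\<sigma> i, \<sigma> j) \<in> p"
    proof (intro ballI impI)
      fix i j p assume i: "i \<in> {1..r}" and j: "j \<in> {1..r}" and p: "p \<in> P" and ij: "(i,j) \<in> p"
      let ?o = "{(\<tau> i, \<tau> j) |\<tau>. \<tau> \<in> G}"
      have "?o \<in> pair_orbits G r" using i j by (auto simp: pair_orbits_def)
      then obtain q where q: "q \<in> P" "?o \<subseteq> q" using Gr by (auto simp: refines_def)
      have "(i,j) \<in> ?o" using idG by (intro CollectI exI[of _ id]) simp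
      then have "q = p" using part_uniq[OF part q(1) p _ ij] q(2) by blast
      moreover have "(\<sigma> i, \<sigma> j) \<in> ?o" using s by blast
      ultimately show "(\<sigma> i, \<sigma> j) \<in> p" using q(2) by blast
    qed
    then show "\<sigma> \<in> H" using sp by (simp add: H_def)
  qed
  have "complete_lattice (refining_subgroups r P)"
  proof (rule po.complete_lattice_criterion1)
    show "\<exists>g. greatest (refining_subgroups r P) g (carrier (refining_subgroups r P))"
      using Hcar Hbig by (intro exI[of _ H]) (auto simp: greatest_def refining_subgroups_def)
  next
    fix A assume A: "A \<subseteq> carrier (refining_subgroups r P)" "A \<noteq> {}"
    have sA: "subgroup (\<Inter>A) (sym_group r)"
      using A by (intro S.subgroups_Inter) (auto simp: refining_subgroups_def)
    obtain G where G: "G \<in> A" using A by blast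
    have Gr: "refines (pair_orbits G r) P" using G A by (auto simp: refining_subgroups_def)
    have "refines (pair_orbits (\<Inter>A) r) P"
      unfolding refines_def
    proof
      fix o' assume "o' \<in> pair_orbits (\<Inter>A) r"
      then obtain i j where ij: "i \<in> {1..r}" "j \<in> {1..r}" and o: "o' = {(\<sigma> i, \<sigma> j) |\<sigma>. \<sigma> \<in> \<Inter>A}"
        by (auto simp: pair_orbits_def)
      have "{(\<sigma> i, \<sigma> j) |\<sigma>. \<sigma> \<in> G} \<in> pair_orbits G r" using ij by (auto simp: pair_orbits_def)
      then obtain q where q: "q \<in> P" "{(\<sigma> i, \<sigma> j) |\<sigma>. \<sigma> \<in> G} \<subseteq> q" using Gr by (auto simp: refines_def)
      have "o' \<subseteq> q" using q(2) o G by blast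
      then show "\<exists>p\<in>P. o' \<subseteq> p" using q by blast
    qed
    then have Icar: "\<Inter>A \<in> carrier (refining_subgroups r P)"
      using sA by (simp add: refining_subgroups_def)
    show "\<exists>i. greatest (refining_subgroups r P) i (Lower (refining_subgroups r P) A)"
      using Icar A by (intro exI[of _ "\<Inter>A"]) (auto simp: greatest_def Lower_def refining_subgroups_def)
  qed
  then interpret CL: complete_lattice "refining_subgroups r P" .
  show ?thesis by unfold_locales
qed

end
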